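(* Fix integers $z_1>z_2\ge0$ and $k\ge1$. For every $m\ge0$, the number of $(z_1,z_2,k)$-asymmetric partitions of $m$ equals the number of partitions of $m$ of the form \[\lambda^{\{a_1,\dots,a_r\}}=\Big(z_1(r-1)+r,\underbrace{2r-1,\dots,2r-1}_{a_r},\underbrace{2r-3,\dots,2r-3}_{a_{r-1}-a_r},\dots,\underbrace{2k-1,\dots,2k-1}_{a_k-a_{k+1}},\underbrace{2k-2,\dots,2k-2}_{a_{k-1}-a_k},\dots,\underbrace{2,\dots,2}_{a_1-a_2},\underbrace{1,\dots,1}_{z_2}\Big)\] for some integer $r\ge k$ and integers $a_1>a_2>\dots>a_r\ge0$.
   Context: The Frobenius rank of a partition $\mu$ is $r=\max\{j:\mu_j\ge j\}$ and its Frobenius coordinates are $(\alpha\mid\beta)$ with $\alpha_i=\mu_i-i$, $\beta_i=\mu'_i-i$ ($1\le i\le r$, $\mu'$ the conjugate). For $1\le k\le r$, $\mu$ is $(z_1,z_2,k)$-asymmetric if $\mu=(\alpha_1,\dots,\alpha_r\mid\alpha_1+z_1,\dots,\widehat{\alpha_k+z_1},\dots,\alpha_r+z_1,z_2)$ for some strict partition $\alpha$, where the hat denotes omission (so the column coordinates are the decreasing arrangement of $\{\alpha_j+z_1:j\ne k\}\cup\{z_2\}$). *)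

theory Defs
  imports Main
begin

definition is_partition :: "nat list \<Rightarrow> bool" where
  "is_partition \<mu> \<longleftrightarrow> sorted_wrt (\<ge>) \<mu> \<and> 0 \<notin> set \<mu>"

definition part :: "nat list \<Rightarrow> nat \<Rightarrow> nat" where
  "part \<mu> j = (if 1 \<le> j \<and> j \<le> length \<mu> then \<mu> ! (j - 1) else 0)"

definition conj_part :: "nat list \<Rightarrow> nat \<Rightarrow> nat" where
  "conj_part \<mu> i = length (filter (\<lambda>x. i \<le> x) \<mu>)"

definition frob_rank :: "nat list \<Rightarrow> nat" where
  "frob_rank \<mu> = Max ({0} \<union> {j \<in> {1..length \<mu>}. j \<le> part \<mu> j})"

definition frob_alpha :: "nat list \<Rightarrow> nat list" where
  "frob_alpha \<mu> = map (\<lambda>i. part \<mu> i - i) [1..<frob_rank \<mu> + 1]"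

definition frob_beta :: "nat list \<Rightarrow> nat list" where
  "frob_beta \<mu> = map (\<lambda>i. conj_part \<mu> i - i) [1..<frob_rank \<mu> + 1]"

definition asymmetric :: "nat \<Rightarrow> nat \<Rightarrow> nat \<Rightarrow> nat list \<Rightarrow> bool" where
  "asymmetric z1 z2 k \<mu> \<longleftrightarrow>
     (let r = frob_rank \<mu>; \<alpha> = frob_alpha \<mu> in
        1 \<le> k \<and> k \<le> r \<and> sorted_wrt (>) \<alpha> \<and>
        frob_beta \<mu> = rev (sorted_list_of_set
            ({\<alpha> ! (j - 1) + z1 | j. j \<in> {1..r} \<and> j \<noteq> k} \<union> {z2})))"

definition lam :: "nat \<Rightarrow> nat \<Rightarrow> nat \<Rightarrow> nat list \<Rightarrow> nat list" where
  "lam z1 z2 k a =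
     (let r = length a; A = (\<lambda>i. if 1 \<le> i \<and> i \<le> r then a ! (i - 1) else 0) in
       [z1 * (r - 1) + r]
       @ concat (map (\<lambda>i. replicate (A i - A (i + 1)) (if k \<le> i then 2 * i - 1 else 2 * i))
                     (rev [1..<r + 1]))
       @ replicate z2 1)"

end

theory Submission
  imports Defs
begin

declare upt_Suc[simp del]


lemma dc0:
  assumes fin: "finite S" and dc: "\<And>a b. a \<le> b \<Longrightarrow> b \<in> S \<Longrightarrow> a \<in> S"
  shows "t \<in> S \<longleftrightarrow> t < card S"
proof
  assume "t \<in> S"
  then have "{..t} \<subseteq> S" using dc by auto
  then have "card {..t} \<le> card S" by (rule card_mono[OF fin])
  then show "t < card S" by simp
next
  assume h: "t < card S"
  show "t \<in> S"
  proof (rule ccontr)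
    assume "t \<notin> S"
    then have "S \<subseteq> {..<t}" using dc by (meson lessThan_iff not_le subsetI)
    then have "card S \<le> t" using card_mono[of "{..<t}" S] by simp
    then show False using h by simp
  qed
qed

lemma dc1:
  assumes fin: "finite S" and z: "0 \<notin> S" and dc: "\<And>a b. 1 \<le> a \<Longrightarrow> a \<le> b \<Longrightarrow> b \<in> S \<Longrightarrow> a \<in> S"
    and j: "1 \<le> j"
  shows "j \<in> S \<longleftrightarrow> j \<le> card S"
proof
  assume "j \<in> S"
  then have "{1..j} \<subseteq> S" using dc by auto
  then have "card {1..j} \<le> card S" by (rule card_mono[OF fin])
  then show "j \<le> card S" by simp
next
  assume h: "j \<le> card S"
  show "j \<in> S"
  proof (rule ccontr)
    assume "j \<notin> S"
    have "S \<subseteq> {1..<j}"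
    proof
      fix b assume b: "b \<in> S"
      then have "b \<noteq> 0" using z by metis
      moreover have "b < j" using dc[OF j _ b] \<open>j \<notin> S\<close> by (meson not_le)
      ultimately show "b \<in> {1..<j}" by simp
    qed
    then have "card S \<le> j - 1" using card_mono[of "{1..<j}" S] by simp
    then show False using h j by simp
  qed
qed

lemma dc1_eq:
  assumes fin: "finite S" and z: "0 \<notin> S" and dc: "\<And>a b. 1 \<le> a \<Longrightarrow> a \<le> b \<Longrightarrow> b \<in> S \<Longrightarrow> a \<in> S"
  shows "S = {1..card S}"
proof -
  show ?thesis
  proof (intro set_eqI)
    fix y :: nat
    show "y \<in> S \<longleftrightarrow> y \<in> {1..card S}"
    proof (cases "y = 0")
      case True then show ?thesis using z by simp
    next
      case False then show ?thesis using dc1[OF fin z, where j=y] dc by auto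
    qed
  qed
qed

lemma strict_gap:
  assumes "sorted_wrt (>) xs" "i \<le> j" "j < length xs"
  shows "xs ! j + (j - i) \<le> xs ! i"
  using assms(2,3)
proof (induction j)
  case 0 then show ?case by simp
next
  case (Suc j)
  show ?case
  proof (cases "i = Suc j")
    case True then show ?thesis by simp
  next
    case False
    then have "i \<le> j" using Suc.prems by simp
    then have "xs ! j + (j - i) \<le> xs ! i" using Suc by simp
    moreover have "xs ! Suc j < xs ! j" using sorted_wrt_nth_less[OF assms(1), of j "Suc j"] Suc.prems by simp
    ultimately show ?thesis using \<open>i \<le> j\<close> by simp
  qed
qed

lemma part_mono:
  assumes "sorted_wrt (\<ge>) \<mu>" "1 \<le> i" "i \<le> j"
  shows "part \<mu> j \<le> part \<mu> i"
proof (cases "j \<le> length \<mu>")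
  case True
  show ?thesis
  proof (cases "i = j")
    case False
    then have "i - 1 < j - 1" using assms by simp
    then have "\<mu> ! (j - 1) \<le> \<mu> ! (i - 1)" using sorted_wrt_nth_less[OF assms(1), of "i - 1" "j - 1"] True assms by simp
    then show ?thesis using True assms by (simp add: part_def)
  qed simp
next
  case False then show ?thesis by (simp add: part_def)
qed

lemma duality:
  assumes s: "sorted_wrt (\<ge>) \<mu>" and i: "1 \<le> i" and j: "1 \<le> j"
  shows "i \<le> conj_part \<mu> j \<longleftrightarrow> j \<le> part \<mu> i"
proof -
  let ?S = "{t. t < length \<mu> \<and> j \<le> \<mu> ! t}"
  have c: "conj_part \<mu> j = card ?S" by (simp add: conj_part_def length_filter_conv_card)
  have dc: "a \<in> ?S" if "a \<le> b" "b \<in> ?S" for a b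
  proof (cases "a = b")
    case False
    then have "\<mu> ! b \<le> \<mu> ! a" using sorted_wrt_nth_less[OF s, of a b] that by auto
    then show ?thesis using that by auto
  qed (use that in auto)
  have "i \<le> card ?S \<longleftrightarrow> i - 1 < card ?S" using i by auto
  also have "\<dots> \<longleftrightarrow> i - 1 \<in> ?S" using dc0[of ?S "i - 1"] dc by auto
  also have "\<dots> \<longleftrightarrow> j \<le> part \<mu> i" using i j by (auto simp: part_def)
  finally show ?thesis using c by simp
qed

lemma rank_char:
  assumes s: "sorted_wrt (\<ge>) \<mu>"
  shows "frob_rank \<mu> \<le> length \<mu>"
    and "\<And>j. 1 \<le> j \<Longrightarrow> j \<le> frob_rank \<mu> \<Longrightarrow> j \<le> part \<mu> j"
    and "part \<mu> (Suc (frob_rank \<mu>)) \<le> frob_rank \<mu>"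
proof -
  let ?P = "{j \<in> {1..length \<mu>}. j \<le> part \<mu> j}"
  have dc: "a \<in> ?P" if "1 \<le> a" "a \<le> b" "b \<in> ?P" for a b
    using that part_mono[OF s, of a b] by auto
  have eq: "?P = {1..card ?P}" by (rule dc1_eq) (use dc in auto)
  define c where "c = card ?P"
  have eq': "?P = {1..c}" using eq unfolding c_def .
  have "frob_rank \<mu> = Max ({0} \<union> {1..c})" unfolding frob_rank_def eq' by simp
  also have "\<dots> = c"
  proof (cases "c = 0")
    case False
    then show ?thesis by (intro Max_eqI) auto
  qed simp
  finally have r: "frob_rank \<mu> = card ?P" unfolding c_def .
  have mem: "j \<in> ?P \<longleftrightarrow> 1 \<le> j \<and> j \<le> frob_rank \<mu>" for j
    using eq r by (metis atLeastAtMost_iff)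
  show "frob_rank \<mu> \<le> length \<mu>"
    using mem[of "frob_rank \<mu>"] by (cases "frob_rank \<mu> = 0") auto
  show "\<And>j. 1 \<le> j \<Longrightarrow> j \<le> frob_rank \<mu> \<Longrightarrow> j \<le> part \<mu> j" using mem by auto
  show "part \<mu> (Suc (frob_rank \<mu>)) \<le> frob_rank \<mu>"
    using mem[of "Suc (frob_rank \<mu>)"] by (auto simp: part_def)
qed

lemma rank_eqI:
  assumes s: "sorted_wrt (\<ge>) \<mu>" and "r \<le> length \<mu>" and "\<And>j. 1 \<le> j \<Longrightarrow> j \<le> r \<Longrightarrow> j \<le> part \<mu> j"
    and "part \<mu> (Suc r) \<le> r"
  shows "frob_rank \<mu> = r"
proof (rule ccontr)
  assume ne: "frob_rank \<mu> \<noteq> r"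
  show False
  proof (cases "frob_rank \<mu> < r")
    case True
    have "Suc (frob_rank \<mu>) \<le> part \<mu> (Suc (frob_rank \<mu>))" using assms(3) True by simp
    then show False using rank_char(3)[OF s] by simp
  next
    case False
    then have "Suc r \<le> frob_rank \<mu>" using ne by simp
    then have "Suc r \<le> part \<mu> (Suc r)" using rank_char(2)[OF s] by simp
    then show False using assms(4) by simp
  qed
qed



definition bpart :: "nat list \<Rightarrow> nat list \<Rightarrow> nat \<Rightarrow> nat" where
  "bpart al be i = (if i \<le> length al then al ! (i - 1) + i
                    else card {j \<in> {1..length al}. i \<le> be ! (j - 1) + j})"

definition build :: "nat list \<Rightarrow> nat list \<Rightarrow> nat list" where
  "build al be = map (bpart al be) [1..<be ! 0 + 2]"

lemma part_one_le_conj: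
  assumes s: "sorted_wrt (\<ge>) \<mu>" and j: "1 \<le> j" "j \<le> frob_rank \<mu>"
  shows "j \<le> conj_part \<mu> j"
  using duality[OF s j(1) j(1)] rank_char(2)[OF s j] by simp

lemma conj_part_mono:
  "i \<le> j \<Longrightarrow> conj_part \<mu> j \<le> conj_part \<mu> i"
proof -
  assume "i \<le> j"
  have "length (filter (\<lambda>x. j \<le> x) \<mu>) \<le> length (filter (\<lambda>x. i \<le> x) \<mu>)"
  proof (induction \<mu>)
    case (Cons a \<mu>) then show ?case using \<open>i \<le> j\<close> by auto
  qed simp
  then show ?thesis by (simp add: conj_part_def)
qed

lemma beta_strict:
  assumes p: "is_partition \<mu>"
  shows "sorted_wrt (>) (frob_beta \<mu>)"
proof -
  have s: "sorted_wrt (\<ge>) \<mu>" using p by (simp add: is_partition_def)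
  let ?r = "frob_rank \<mu>"
  show ?thesis
    unfolding sorted_wrt_iff_nth_less
  proof (intro allI impI)
    fix p q assume pq: "p < q" "q < length (frob_beta \<mu>)"
    then have q: "q < ?r" by (simp add: frob_beta_def)
    have "Suc q \<le> conj_part \<mu> (Suc q)" using part_one_le_conj[OF s, of "Suc q"] q by simp
    moreover have "conj_part \<mu> (Suc q) \<le> conj_part \<mu> (Suc p)" using pq by (intro conj_part_mono) simp
    ultimately show "frob_beta \<mu> ! q < frob_beta \<mu> ! p"
      using pq q by (simp add: frob_beta_def nth_append)
  qed
qed

lemma len_conj1:
  assumes p: "is_partition \<mu>"
  shows "conj_part \<mu> 1 = length \<mu>"
proof -
  have "filter (\<lambda>x. 1 \<le> x) \<mu> = \<mu>" using p unfolding is_partition_def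
    by (intro filter_True) (metis less_one not_less)
  then show ?thesis by (simp add: conj_part_def)
qed

lemma recon:
  assumes p: "is_partition \<mu>" and r1: "1 \<le> frob_rank \<mu>"
  shows "build (frob_alpha \<mu>) (frob_beta \<mu>) = \<mu>"
proof -
  have s: "sorted_wrt (\<ge>) \<mu>" using p by (simp add: is_partition_def)
  let ?r = "frob_rank \<mu>"
  let ?al = "frob_alpha \<mu>" and ?be = "frob_beta \<mu>"
  have lal: "length ?al = ?r" by (simp add: frob_alpha_def)
  have rl: "?r \<le> length \<mu>" by (rule rank_char(1)[OF s])
  have be0: "?be ! 0 = conj_part \<mu> 1 - 1" using r1 by (simp add: frob_beta_def nth_append)
  have L: "?be ! 0 + 2 = Suc (length \<mu>)" using be0 len_conj1[OF p] r1 rl by simp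
  show ?thesis
  proof (rule nth_equalityI)
    show "length (build ?al ?be) = length \<mu>" using L by (simp add: build_def)
    fix t assume "t < length (build ?al ?be)"
    then have t: "t < length \<mu>" using L by (simp add: build_def)
    have bt: "build ?al ?be ! t = bpart ?al ?be (Suc t)" using t L by (simp add: build_def)
    have pt: "part \<mu> (Suc t) = \<mu> ! t" using t by (simp add: part_def)
    show "build ?al ?be ! t = \<mu> ! t"
    proof (cases "Suc t \<le> ?r")
      case True
      have "Suc t \<le> part \<mu> (Suc t)" using rank_char(2)[OF s, of "Suc t"] True by simp
      moreover have "?al ! t = part \<mu> (Suc t) - Suc t" using True by (simp add: frob_alpha_def nth_append)
      ultimately show ?thesis using bt pt True lal by (simp add: bpart_def)
    next
      case False
      have le: "part \<mu> (Suc t) \<le> ?r"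
        using part_mono[OF s, of "Suc ?r" "Suc t"] rank_char(3)[OF s] False by simp
      have "{j \<in> {1..length ?al}. Suc t \<le> ?be ! (j - 1) + j} = {j \<in> {1..?r}. Suc t \<le> conj_part \<mu> j}"
      proof (intro Collect_cong conj_cong refl)
        fix j assume j: "j \<in> {1..?r}"
        have "?be ! (j - 1) = conj_part \<mu> j - j" using j by (auto simp: frob_beta_def nth_append)
        moreover have "j \<le> conj_part \<mu> j" using part_one_le_conj[OF s, of j] j by simp
        ultimately show "Suc t \<le> ?be ! (j - 1) + j \<longleftrightarrow> Suc t \<le> conj_part \<mu> j" by simp
      qed (simp add: lal)
      also have "\<dots> = {j \<in> {1..?r}. j \<le> part \<mu> (Suc t)}"
        using duality[OF s, of "Suc t"] by auto
      also have "\<dots> = {1..part \<mu> (Suc t)}" using le by auto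
      finally show ?thesis using bt pt False lal by (simp add: bpart_def)
    qed
  qed
qed



lemma eq_from_le_iff:
  fixes C D :: nat
  assumes "\<And>i. 1 \<le> i \<Longrightarrow> i \<le> C \<longleftrightarrow> i \<le> D"
  shows "C = D"
proof (rule ccontr)
  assume "C \<noteq> D"
  then consider "C < D" | "D < C" by linarith
  then show False
  proof cases
    case 1 then show False using assms[of D] by simp
  next
    case 2 then show False using assms[of C] by simp
  qed
qed

lemma sum_shift1: "(\<Sum>i\<in>{1..n}. f i) = (\<Sum>i<n. f (Suc i :: nat))"
  by (induction n) (auto simp: atLeastAtMostSuc_conv add.commute)

lemma sum_list_shift1: "sum_list xs = (\<Sum>i\<in>{1..length xs}. xs ! (i - 1))"
  using sum_shift1[of "\<lambda>i. xs ! (i - 1)" "length xs"] by (simp add: sum_list_sum_nth atLeast0LessThan)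

lemma card_filter_sum: "finite J \<Longrightarrow> card {j \<in> J. P j} = (\<Sum>j\<in>J. if P j then 1 else 0 :: nat)"
  by (simp add: sum.If_cases Int_def)

lemma card_sub_le: "card {j \<in> {1..r}. P j} \<le> (r::nat)"
proof -
  have "card {j \<in> {1..r}. P j} \<le> card {1..r}" by (rule card_mono) auto
  then show ?thesis by simp
qed

locale bsetup =
  fixes al be :: "nat list" and r :: nat
  assumes sa: "sorted_wrt (>) al" and sb: "sorted_wrt (>) be"
    and la: "length al = r" and lb: "length be = r" and r1: "1 \<le> r"
begin

abbreviation "L \<equiv> be ! 0 + 1"
abbreviation "bb j \<equiv> be ! (j - 1) + j"
abbreviation "\<nu> \<equiv> build al be"

lemma bb_le: "1 \<le> j \<Longrightarrow> j \<le> r \<Longrightarrow> bb j \<le> L"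
proof -
  assume a: "1 \<le> j" "j \<le> r"
  have "j - 1 < length be" using a lb by simp
  from strict_gap[OF sb _ this, of 0] have "be ! (j - 1) + (j - 1) \<le> be ! 0" by simp
  then show ?thesis using a by simp
qed

lemma bb_ge: "1 \<le> j \<Longrightarrow> j \<le> r \<Longrightarrow> r \<le> bb j"
proof -
  assume a: "1 \<le> j" "j \<le> r"
  have "r - 1 < length be" "j - 1 \<le> r - 1" using a lb by auto
  from strict_gap[OF sb this(2,1)] have "be ! (r - 1) + (r - 1 - (j - 1)) \<le> be ! (j - 1)" .
  then show ?thesis using a by simp
qed

lemma rL: "r \<le> L" using bb_le[of r] bb_ge[of r] r1 by simp

lemma len_nu: "length \<nu> = L" by (simp add: build_def)

lemma part_nu: "part \<nu> i = (if 1 \<le> i \<and> i \<le> L then bpart al be i else 0)"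
proof (cases "1 \<le> i \<and> i \<le> L")
  case True
  then have "\<nu> ! (i - 1) = bpart al be i" unfolding build_def
    by (subst nth_map) (auto simp: nth_upt)
  then show ?thesis using True len_nu by (simp add: part_def)
next
  case False then show ?thesis using len_nu by (auto simp: part_def)
qed

lemma bpart_mono:
  assumes "1 \<le> i" "i \<le> i'"
  shows "bpart al be i' \<le> bpart al be i"
proof (cases "i' \<le> r")
  case True
  have "al ! (i' - 1) + (i' - i) \<le> al ! (i - 1)" using strict_gap[OF sa, of "i - 1" "i' - 1"] assms True la by simp
  then show ?thesis using True assms la by (simp add: bpart_def)
next
  case False
  have c: "card {j \<in> {1..r}. i' \<le> bb j} \<le> r"
    by (rule card_sub_le)
  show ?thesis
  proof (cases "i \<le> r")
    case True
    have "al ! (r - 1) + (r - 1 - (i - 1)) \<le> al ! (i - 1)"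
      using strict_gap[OF sa, of "i - 1" "r - 1"] True assms la r1 by simp
    then have "r \<le> al ! (i - 1) + i" using True assms by simp
    then show ?thesis using False c la True by (simp add: bpart_def)
  next
    case F2: False
    have "card {j \<in> {1..r}. i' \<le> bb j} \<le> card {j \<in> {1..r}. i \<le> bb j}"
      by (rule card_mono) (use assms in auto)
    then show ?thesis using False F2 la by (simp add: bpart_def)
  qed
qed

lemma bpart_pos: "1 \<le> i \<Longrightarrow> i \<le> L \<Longrightarrow> 1 \<le> bpart al be i"
proof -
  assume i: "1 \<le> i" "i \<le> L"
  show ?thesis
  proof (cases "i \<le> r")
    case False
    have "1 \<in> {j \<in> {1..r}. i \<le> bb j}" using i r1 by simp
    then have "{j \<in> {1..r}. i \<le> bb j} \<noteq> {}" by blast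
    then have c: "card {j \<in> {1..r}. i \<le> bb j} \<noteq> 0" by (simp add: card_eq_0_iff)
    have "bpart al be i = card {j \<in> {1..r}. i \<le> bb j}" using False la by (simp add: bpart_def)
    then show ?thesis using c by linarith
  qed (use i la in \<open>simp add: bpart_def\<close>)
qed

lemma part_nu_low: "1 \<le> i \<Longrightarrow> i \<le> r \<Longrightarrow> part \<nu> i = al ! (i - 1) + i"
  using rL la by (simp add: part_nu bpart_def)

lemma part_nu_high: "r < i \<Longrightarrow> i \<le> L \<Longrightarrow> part \<nu> i = card {j \<in> {1..r}. i \<le> bb j}"
  using rL la by (simp add: part_nu bpart_def)

lemma nu_sorted: "sorted_wrt (\<ge>) \<nu>"
  unfolding build_def sorted_wrt_map
  by (rule sorted_wrt_mono_rel[where P="(<)"]) (auto intro: bpart_mono simp: sorted_wrt_upt)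

lemma nu_partition: "is_partition \<nu>"
proof -
  have "0 \<notin> set \<nu>" using bpart_pos unfolding build_def by fastforce
  then show ?thesis using nu_sorted by (simp add: is_partition_def)
qed

lemma nu_rank: "frob_rank \<nu> = r"
proof (rule rank_eqI[OF nu_sorted])
  show "r \<le> length \<nu>" using rL len_nu by simp
  show "j \<le> part \<nu> j" if "1 \<le> j" "j \<le> r" for j using part_nu_low[OF that] by simp
  show "part \<nu> (Suc r) \<le> r"
  proof (cases "Suc r \<le> L")
    case True
    then show ?thesis using part_nu_high[of "Suc r"] card_sub_le[of r] by simp
  next
    case False then show ?thesis by (simp add: part_nu)
  qed
qed

lemma nu_alpha: "frob_alpha \<nu> = al"
  by (rule nth_equalityI) (auto simp: frob_alpha_def nu_rank la part_nu_low nth_upt)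

lemma nu_conj: assumes j: "1 \<le> j" "j \<le> r" shows "conj_part \<nu> j = bb j"
proof (rule eq_from_le_iff)
  fix i :: nat assume i: "1 \<le> i"
  have "i \<le> conj_part \<nu> j \<longleftrightarrow> j \<le> part \<nu> i" by (rule duality[OF nu_sorted i j(1)])
  also have "\<dots> \<longleftrightarrow> i \<le> bb j"
  proof (cases "i \<le> r")
    case True
    have "bpart al be r \<le> bpart al be i" using bpart_mono[OF i True] .
    moreover have "r \<le> bpart al be r" using la by (simp add: bpart_def)
    ultimately have "r \<le> part \<nu> i" using part_nu_low[OF i True] True la by (simp add: bpart_def)
    then show ?thesis using True bb_ge[OF j] j by simp
  next
    case False
    show ?thesis
    proof (cases "i \<le> L")
      case True
      let ?S = "{j \<in> {1..r}. i \<le> bb j}"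
      have "j \<in> ?S \<longleftrightarrow> j \<le> card ?S"
      proof (rule dc1)
        fix a b assume ab: "1 \<le> a" "a \<le> b" "b \<in> ?S"
        have "a - 1 \<le> b - 1" "b - 1 < length be" using ab lb by auto
        from strict_gap[OF sb this] have "be ! (b - 1) + (b - a) \<le> be ! (a - 1)" using ab by simp
        then show "a \<in> ?S" using ab by auto
      qed (use j in auto)
      then show ?thesis using part_nu_high[of i] False True j by simp
    next
      case F2: False
      then show ?thesis using bb_le[OF j] j by (simp add: part_nu)
    qed
  qed
  finally show "i \<le> conj_part \<nu> j \<longleftrightarrow> i \<le> bb j" .
qed

lemma nu_beta: "frob_beta \<nu> = be"
  by (rule nth_equalityI) (auto simp: frob_beta_def nu_rank lb nu_conj nth_upt)

lemma nu_sum: "sum_list \<nu> = sum_list al + sum_list be + r"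
proof -
  have "sum_list \<nu> = (\<Sum>i\<in>{1..<L+1}. bpart al be i)"
    by (simp add: build_def interv_sum_list_conv_sum_set_nat)
  also have "{1..<L+1} = {1..r} \<union> {r+1..L}" using rL r1 by auto
  also have "(\<Sum>i\<in>{1..r} \<union> {r+1..L}. bpart al be i) = (\<Sum>i\<in>{1..r}. bpart al be i) + (\<Sum>i\<in>{r+1..L}. bpart al be i)"
    by (rule sum.union_disjoint) auto
  also have "(\<Sum>i\<in>{1..r}. bpart al be i) = (\<Sum>i\<in>{1..r}. al ! (i - 1) + i)"
    by (rule sum.cong) (auto simp: bpart_def la)
  also have "(\<Sum>i\<in>{r+1..L}. bpart al be i) = (\<Sum>i\<in>{r+1..L}. \<Sum>j\<in>{1..r}. if i \<le> bb j then 1 else 0)"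
  proof (rule sum.cong)
    fix x assume "x \<in> {r+1..L}"
    then have "bpart al be x = card {j\<in>{1..r}. x \<le> bb j}" using la by (simp add: bpart_def)
    also have "\<dots> = (\<Sum>j\<in>{1..r}. if x \<le> bb j then 1 else 0)" by (rule card_filter_sum) simp
    finally show "bpart al be x = (\<Sum>j\<in>{1..r}. if x \<le> bb j then 1 else 0)" .
  qed simp
  also have "\<dots> = (\<Sum>j\<in>{1..r}. \<Sum>i\<in>{r+1..L}. if i \<le> bb j then 1 else 0)"
    by (rule sum.swap)
  also have "\<dots> = (\<Sum>j\<in>{1..r}. bb j - r)"
  proof (rule sum.cong)
    fix j assume j: "j \<in> {1..r}"
    have "(\<Sum>i\<in>{r+1..L}. if i \<le> bb j then 1 else 0) = card {i \<in> {r+1..L}. i \<le> bb j}"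
      by (rule card_filter_sum[symmetric]) simp
    also have "{i \<in> {r+1..L}. i \<le> bb j} = {r+1..bb j}" using bb_le[of j] j by auto
    finally show "(\<Sum>i\<in>{r+1..L}. if i \<le> bb j then 1 else 0) = bb j - r" by simp
  qed simp
  finally have e: "sum_list \<nu> = (\<Sum>i\<in>{1..r}. al ! (i - 1) + i) + (\<Sum>j\<in>{1..r}. bb j - r)" .
  have e2: "(\<Sum>j\<in>{1..r}. bb j - r) + r * r = (\<Sum>j\<in>{1..r}. be ! (j - 1)) + (\<Sum>j\<in>{1..r}. j)"
  proof -
    have "(\<Sum>j\<in>{1..r}. bb j - r) + r * r = (\<Sum>j\<in>{1..r}. bb j - r + r)" by (simp add: sum.distrib)
    also have "\<dots> = (\<Sum>j\<in>{1..r}. bb j)" by (rule sum.cong) (use bb_ge in auto)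
    finally show ?thesis by (simp add: sum.distrib)
  qed
  have g: "(\<Sum>j\<in>{1..r}. j) * 2 = r * r + r"
    by (induction r) (auto simp: atLeastAtMostSuc_conv)
  have sa': "sum_list al = (\<Sum>i\<in>{1..r}. al ! (i - 1))" using sum_list_shift1[of al] la by simp
  have sb': "sum_list be = (\<Sum>i\<in>{1..r}. be ! (i - 1))" using sum_list_shift1[of be] lb by simp
  show ?thesis using e e2 g sa' sb' by (simp add: sum.distrib)
qed

end



definition Af :: "nat list \<Rightarrow> nat \<Rightarrow> nat" where
  "Af a i = (if 1 \<le> i \<and> i \<le> length a then a ! (i - 1) else 0)"

definition cf :: "nat \<Rightarrow> nat \<Rightarrow> nat" where
  "cf k i = (if k \<le> i then 2 * i - 1 else 2 * i)"

definition Mid :: "nat \<Rightarrow> nat list \<Rightarrow> nat list" where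
  "Mid k a = concat (map (\<lambda>i. replicate (Af a i - Af a (i + 1)) (cf k i)) (rev [1..<length a + 1]))"

lemma lam_alt: "lam z1 z2 k a = [z1 * (length a - 1) + length a] @ Mid k a @ replicate z2 1"
  by (simp add: lam_def Mid_def Af_def cf_def Let_def)

lemma cf_mono: "x < y \<Longrightarrow> cf k x \<le> cf k y"
  by (auto simp: cf_def)

lemma cf_pos: "1 \<le> i \<Longrightarrow> 1 \<le> cf k i"
  by (auto simp: cf_def)

lemma cf_inj: "1 \<le> i \<Longrightarrow> 1 \<le> j \<Longrightarrow> cf k i = cf k j \<Longrightarrow> i = j"
  by (auto simp: cf_def split: if_splits)

lemma Af_dec: "sorted_wrt (>) a \<Longrightarrow> 1 \<le> i \<Longrightarrow> Af a (Suc i) \<le> Af a i"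
proof -
  assume s: "sorted_wrt (>) a" and i: "1 \<le> i"
  show ?thesis
  proof (cases "Suc i \<le> length a")
    case True
    have "a ! i < a ! (i - 1)" using sorted_wrt_nth_less[OF s, of "i - 1" i] True i by simp
    then show ?thesis using True i by (simp add: Af_def)
  qed (simp add: Af_def)
qed

lemma sorted_wrt_rep: "sorted_wrt (\<ge>) (replicate m (x::'a::linorder))"
  by (induction m) auto

lemma sorted_concat_rep:
  fixes c :: "nat \<Rightarrow> nat"
  assumes "sorted_wrt (\<lambda>x y. c y \<le> c x) xs"
  shows "sorted_wrt (\<ge>) (concat (map (\<lambda>i. replicate (n i) (c i)) xs))"
  using assms
proof (induction xs)
  case (Cons x xs)
  have r: "sorted_wrt (\<ge>) (replicate (n x) (c x))"
    using sorted_wrt_rep by blast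
  show ?case using Cons r by (auto simp: sorted_wrt_append)
qed simp

lemma set_Mid: "set (Mid k a) \<subseteq> cf k ` {1..length a}"
  unfolding Mid_def by (auto simp: set_upt)

lemma lam_partition:
  assumes z1: "1 \<le> z1" and s: "sorted_wrt (>) a" and k: "1 \<le> k" "k \<le> length a"
  shows "is_partition (lam z1 z2 k a)"
proof -
  let ?r = "length a"
  have sM: "sorted_wrt (\<ge>) (Mid k a)" unfolding Mid_def
  proof (rule sorted_concat_rep)
    have "sorted_wrt (\<lambda>x y. cf k x \<le> cf k y) [1..<?r + 1]"
      by (rule sorted_wrt_mono_rel[where P="(<)"]) (auto intro: cf_mono simp: sorted_wrt_upt)
    then show "sorted_wrt (\<lambda>x y. cf k y \<le> cf k x) (rev [1..<?r + 1])" by (simp add: sorted_wrt_rev)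
  qed
  have h: "2 * ?r - 1 \<le> z1 * (?r - 1) + ?r"
  proof -
    have "?r - 1 \<le> z1 * (?r - 1)" using mult_le_mono1[of 1 z1 "?r - 1"] z1 by simp
    then show ?thesis by arith
  qed
  have bndM: "1 \<le> x \<and> x \<le> z1 * (?r - 1) + ?r" if xM: "x \<in> set (Mid k a)" for x
  proof -
    obtain i where i: "i \<in> {1..?r}" "x = cf k i" using set_Mid xM by blast
    have "cf k i \<le> 2 * ?r - 1" using i k by (auto simp: cf_def)
    then show ?thesis using i h cf_pos[of i k] by simp
  qed
  have rep: "sorted_wrt (\<ge>) (replicate z2 (1::nat))" by (induction z2) auto
  have "sorted_wrt (\<ge>) (lam z1 z2 k a)"
    unfolding lam_alt using sM rep bndM k by (auto simp: sorted_wrt_append)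
  moreover have "0 \<notin> set (lam z1 z2 k a)"
    unfolding lam_alt using bndM k by fastforce
  ultimately show ?thesis by (simp add: is_partition_def)
qed

lemma sum_list_concat': "sum_list (concat xss) = sum_list (map sum_list (xss :: nat list list))"
  by (induction xss) auto

lemma sum_Mid: "sum_list (Mid k a) = (\<Sum>i\<in>{1..length a}. (Af a i - Af a (Suc i)) * cf k i)"
proof -
  have "sum_list (Mid k a) = sum_list (map (\<lambda>i. (Af a i - Af a (i + 1)) * cf k i) (rev [1..<length a + 1]))"
    unfolding Mid_def sum_list_concat' by (simp add: sum_list_replicate o_def)
  also have "\<dots> = sum_list (map (\<lambda>i. (Af a i - Af a (i + 1)) * cf k i) [1..<length a + 1])"
    by (simp add: rev_map[symmetric])
  also have "\<dots> = (\<Sum>i\<in>{1..<length a + 1}. (Af a i - Af a (i + 1)) * cf k i)"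
    by (simp add: interv_sum_list_conv_sum_set_nat)
  also have "{1..<length a + 1} = {1..length a}" by auto
  finally show ?thesis by simp
qed

lemma tele:
  fixes A :: "nat \<Rightarrow> nat"
  assumes k: "1 \<le> k" and dec: "\<And>i. 1 \<le> i \<Longrightarrow> A (Suc i) \<le> A i"
  shows "int (\<Sum>i\<in>{1..n}. (A i - A (Suc i)) * cf k i)
         = (\<Sum>i\<in>{1..n}. (if i = k then 1 else 2) * int (A i)) - int (cf k n) * int (A (Suc n))"
proof (induction n)
  case 0 then show ?case using k by (simp add: cf_def)
next
  case (Suc n)
  have c: "int (cf k (Suc n)) = int (cf k n) + (if Suc n = k then 1 else 2)"
    using k by (auto simp: cf_def)
  have d: "int (A (Suc n) - A (Suc (Suc n))) = int (A (Suc n)) - int (A (Suc (Suc n)))"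
    using dec[of "Suc n"] by simp
  have "int (\<Sum>i\<in>{1..Suc n}. (A i - A (Suc i)) * cf k i)
        = int (\<Sum>i\<in>{1..n}. (A i - A (Suc i)) * cf k i) + int (A (Suc n) - A (Suc (Suc n))) * int (cf k (Suc n))"
    by (simp add: atLeastAtMostSuc_conv)
  also have "\<dots> = (\<Sum>i\<in>{1..Suc n}. (if i = k then 1 else 2) * int (A i)) - int (cf k (Suc n)) * int (A (Suc (Suc n)))"
    unfolding Suc.IH d c by (simp add: atLeastAtMostSuc_conv algebra_simps)
  finally show ?case .
qed

lemma lam_sum:
  assumes s: "sorted_wrt (>) a" and k: "1 \<le> k" "k \<le> length a"
  shows "sum_list (lam z1 z2 k a) = z1 * (length a - 1) + length a + (2 * sum_list a - a ! (k - 1)) + z2"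
proof -
  let ?r = "length a"
  have t: "int (sum_list (Mid k a)) = (\<Sum>i\<in>{1..?r}. (if i = k then 1 else 2) * int (Af a i))"
    using tele[OF k(1), of "Af a" ?r] Af_dec[OF s] sum_Mid[of k a] by (simp add: Af_def)
  have "(\<Sum>i\<in>{1..?r}. (if i = k then 1 else 2) * int (Af a i))
      = (\<Sum>i\<in>{1..?r}. 2 * int (Af a i)) - (\<Sum>i\<in>{1..?r}. if i = k then int (Af a i) else 0)"
    by (subst sum_subtractf[symmetric]) (rule sum.cong, auto)
  also have "(\<Sum>i\<in>{1..?r}. if i = k then int (Af a i) else 0) = int (a ! (k - 1))"
    using k by (simp add: Af_def)
  also have "(\<Sum>i\<in>{1..?r}. 2 * int (Af a i)) = 2 * int (sum_list a)"
  proof -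
    have "(\<Sum>i\<in>{1..?r}. Af a i) = sum_list a" unfolding sum_list_shift1[of a]
      by (rule sum.cong) (auto simp: Af_def)
    then have "(\<Sum>i\<in>{1..?r}. int (Af a i)) = int (sum_list a)" by (metis of_nat_sum)
    then show ?thesis by (simp add: sum_distrib_left[symmetric])
  qed
  finally have "int (sum_list (Mid k a)) = 2 * int (sum_list a) - int (a ! (k - 1))" using t by simp
  moreover have "a ! (k - 1) \<le> sum_list a"
    using member_le_sum_list[of "a ! (k - 1)" a] k by simp
  ultimately have "sum_list (Mid k a) = 2 * sum_list a - a ! (k - 1)" by linarith
  then show ?thesis unfolding lam_alt by (simp add: sum_list_replicate)
qed



lemma count_Mid:
  assumes i0: "1 \<le> i0" "i0 \<le> length a"
  shows "length (filter ((=) (cf k i0)) (Mid k a)) = Af a i0 - Af a (Suc i0)"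
proof -
  have "length (filter ((=) (cf k i0)) (Mid k a))
      = sum_list (map (\<lambda>i. if cf k i0 = cf k i then Af a i - Af a (i + 1) else 0) (rev [1..<length a + 1]))"
    unfolding Mid_def filter_concat length_concat
    by (simp add: o_def filter_replicate, intro arg_cong[where f=sum_list] map_cong) auto
  also have "\<dots> = sum_list (map (\<lambda>i. if cf k i0 = cf k i then Af a i - Af a (i + 1) else 0) [1..<length a + 1])"
    by (simp add: rev_map[symmetric])
  also have "\<dots> = (\<Sum>i\<in>{1..<length a + 1}. if cf k i0 = cf k i then Af a i - Af a (i + 1) else 0)"
    by (simp add: interv_sum_list_conv_sum_set_nat)
  also have "\<dots> = (\<Sum>i\<in>{1..<length a + 1}. if i = i0 then Af a i - Af a (i + 1) else 0)"
    by (rule sum.cong) (use cf_inj[of i0 _ k] i0 in auto)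
  also have "\<dots> = Af a i0 - Af a (Suc i0)" by (subst sum.delta) (use i0 in auto)
  finally show ?thesis .
qed

lemma lam_inj:
  assumes sa: "sorted_wrt (>) a" and sb: "sorted_wrt (>) b"
    and eq: "lam z1 z2 k a = lam z1 z2 k b"
  shows "a = b"
proof -
  have hd: "z1 * (length a - 1) + length a = z1 * (length b - 1) + length b"
    and tl: "Mid k a = Mid k b" using eq unfolding lam_alt by auto
  have len: "length a = length b"
  proof (rule ccontr)
    assume "length a \<noteq> length b"
    then consider "length a < length b" | "length b < length a" by linarith
    then show False
    proof cases
      case 1
      have "z1 * (length a - 1) \<le> z1 * (length b - 1)" by (rule mult_le_mono2) (use 1 in simp)
      then show False using hd 1 by linarith
    next
      case 2
      have "z1 * (length b - 1) \<le> z1 * (length a - 1)" by (rule mult_le_mono2) (use 2 in simp)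
      then show False using hd 2 by linarith
    qed
  qed
  let ?r = "length a"
  have d: "Af a i - Af a (Suc i) = Af b i - Af b (Suc i)" if "1 \<le> i" "i \<le> ?r" for i
    using count_Mid[of i a k] count_Mid[of i b k] that len tl by simp
  have A: "Af a (Suc ?r - t) = Af b (Suc ?r - t)" if "t \<le> ?r" for t
    using that
  proof (induction t)
    case 0 then show ?case using len by (simp add: Af_def)
  next
    case (Suc t)
    let ?i = "?r - t"
    have i: "1 \<le> ?i" "?i \<le> ?r" using Suc.prems by auto
    have e: "Suc ?r - Suc t = ?i" "Suc ?r - t = Suc ?i" using Suc.prems by auto
    have "Af a ?i = (Af a ?i - Af a (Suc ?i)) + Af a (Suc ?i)" using Af_dec[OF sa i(1)] by simp
    also have "\<dots> = (Af b ?i - Af b (Suc ?i)) + Af b (Suc ?i)"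
      using d[OF i] Suc.IH Suc.prems e by simp
    also have "\<dots> = Af b ?i" using Af_dec[OF sb i(1)] by simp
    finally show ?case using e by simp
  qed
  show ?thesis
  proof (rule nth_equalityI)
    show "length a = length b" by (rule len)
    fix t assume t: "t < length a"
    have "Af a (Suc t) = Af b (Suc t)" using A[of "?r - t"] t by (simp add: Suc_diff_le)
    then show "a ! t = b ! t" using t len by (simp add: Af_def)
  qed
qed

definition Sset :: "nat \<Rightarrow> nat \<Rightarrow> nat \<Rightarrow> nat list \<Rightarrow> nat set" where
  "Sset z1 z2 k a = {a ! (j - 1) + z1 | j. j \<in> {1..length a} \<and> j \<noteq> k} \<union> {z2}"

definition bet :: "nat \<Rightarrow> nat \<Rightarrow> nat \<Rightarrow> nat list \<Rightarrow> nat list" where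
  "bet z1 z2 k a = rev (sorted_list_of_set (Sset z1 z2 k a))"

lemma asym_iff:
  "asymmetric z1 z2 k \<mu> \<longleftrightarrow> 1 \<le> k \<and> k \<le> frob_rank \<mu> \<and> sorted_wrt (>) (frob_alpha \<mu>)
     \<and> frob_beta \<mu> = bet z1 z2 k (frob_alpha \<mu>)"
proof -
  have l: "length (frob_alpha \<mu>) = frob_rank \<mu>" by (simp add: frob_alpha_def)
  show ?thesis unfolding asymmetric_def Let_def bet_def Sset_def l ..
qed

lemma strict_distinct: "sorted_wrt (>) (xs :: nat list) \<Longrightarrow> distinct xs"
  by (induction xs) auto

lemma bet_props:
  assumes z: "z2 < z1" and s: "sorted_wrt (>) a" and k: "1 \<le> k" "k \<le> length a"
  shows "sorted_wrt (>) (bet z1 z2 k a)" "length (bet z1 z2 k a) = length a"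
    "sum_list (bet z1 z2 k a) = sum_list a - a ! (k - 1) + (length a - 1) * z1 + z2"
proof -
  let ?r = "length a"
  let ?g = "\<lambda>j. a ! (j - 1) + z1"
  let ?J = "{1..?r} - {k}"
  have S: "Sset z1 z2 k a = ?g ` ?J \<union> {z2}" unfolding Sset_def by auto
  have fin: "finite (Sset z1 z2 k a)" unfolding S by simp
  have dis: "distinct a" by (rule strict_distinct[OF s])
  have inj: "inj_on ?g ?J"
  proof (rule inj_onI)
    fix x y assume x: "x \<in> ?J" and y: "y \<in> ?J" and e: "?g x = ?g y"
    then have "a ! (x - 1) = a ! (y - 1)" by simp
    then have "x - 1 = y - 1" using nth_eq_iff_index_eq[OF dis] x y by auto
    then show "x = y" using x y by auto
  qed
  have nz: "z2 \<notin> ?g ` ?J" using z by auto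
  have cJ: "card ?J = ?r - 1" using k by simp
  show "sorted_wrt (>) (bet z1 z2 k a)"
    unfolding bet_def sorted_wrt_rev by (rule strict_sorted_list_of_set)
  show "length (bet z1 z2 k a) = ?r"
    unfolding bet_def using card_image[OF inj] nz cJ k by (simp add: S)
  have "sum_list (bet z1 z2 k a) = sum_list (map id (sorted_list_of_set (Sset z1 z2 k a)))"
    unfolding bet_def by simp
  also have "\<dots> = sum id (Sset z1 z2 k a)"
    by (subst sum_list_distinct_conv_sum_set) (auto simp: fin)
  also have "\<dots> = sum id (?g ` ?J) + z2"
    unfolding S using nz by (simp add: add.commute)
  also have "sum id (?g ` ?J) = sum ?g ?J" using sum.reindex[OF inj, of id] by simp
  also have "sum ?g ?J = (\<Sum>j\<in>?J. a ! (j - 1)) + (?r - 1) * z1"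
    using cJ by (simp add: sum.distrib)
  also have "(\<Sum>j\<in>?J. a ! (j - 1)) = sum_list a - a ! (k - 1)"
    using k by (simp add: sum_diff1_nat sum_list_shift1[of a])
  finally show "sum_list (bet z1 z2 k a) = sum_list a - a ! (k - 1) + (?r - 1) * z1 + z2" .
qed



lemma sum_match:
  assumes z: "z2 < z1" and s: "sorted_wrt (>) a" and k: "1 \<le> k" "k \<le> length a"
  shows "sum_list a + sum_list (bet z1 z2 k a) + length a = sum_list (lam z1 z2 k a)"
proof -
  have "a ! (k - 1) \<le> sum_list a" using member_le_sum_list[of "a ! (k - 1)" a] k by simp
  moreover have "(length a - 1) * z1 = z1 * (length a - 1)" by (rule mult.commute)
  ultimately show ?thesis using bet_props(3)[OF z s k] lam_sum[OF s k, of z1 z2] by linarith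
qed

lemma asym_facts:
  assumes as: "asymmetric z1 z2 k \<mu>" and p: "is_partition \<mu>" and z: "z2 < z1"
  shows "\<mu> = build (frob_alpha \<mu>) (bet z1 z2 k (frob_alpha \<mu>))"
    and "sum_list \<mu> = sum_list (lam z1 z2 k (frob_alpha \<mu>))"
proof -
  let ?al = "frob_alpha \<mu>"
  have l: "length ?al = frob_rank \<mu>" by (simp add: frob_alpha_def)
  have k: "1 \<le> k" "k \<le> length ?al" and sa: "sorted_wrt (>) ?al" and be: "frob_beta \<mu> = bet z1 z2 k ?al"
    using as l unfolding asym_iff by auto
  have r1: "1 \<le> frob_rank \<mu>" using k l by simp
  show e: "\<mu> = build ?al (bet z1 z2 k ?al)" using recon[OF p r1] be by simp
  interpret bsetup ?al "bet z1 z2 k ?al" "length ?al"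
    by unfold_locales (use bet_props[OF z sa k] sa k in auto)
  show "sum_list \<mu> = sum_list (lam z1 z2 k ?al)"
    using nu_sum sum_match[OF z sa k] e by simp
qed

lemma sup_part:
  assumes z: "z2 < z1" and k1: "1 \<le> k"
    and p: "is_partition x" and sx: "sum_list x = m" and k: "k \<le> length a"
    and sa: "sorted_wrt (>) a" and x: "x = lam z1 z2 k a"
  shows "\<exists>\<mu>. is_partition \<mu> \<and> sum_list \<mu> = m \<and> asymmetric z1 z2 k \<mu> \<and> x = lam z1 z2 k (frob_alpha \<mu>)"
proof -
      have k': "1 \<le> k" "k \<le> length a" using k k1 by auto
      interpret bsetup a "bet z1 z2 k a" "length a"
        by unfold_locales (use bet_props[OF z sa k'] sa k' in auto)
      have "sum_list (build a (bet z1 z2 k a)) = sum_list (lam z1 z2 k a)" using nu_sum sum_match[OF z sa k'] by linarith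
      then have b1: "sum_list (build a (bet z1 z2 k a)) = m" using sx unfolding x by simp
      have b2: "asymmetric z1 z2 k (build a (bet z1 z2 k a))"
        unfolding asym_iff nu_rank nu_alpha nu_beta using sa k' by simp
      have b3: "x = lam z1 z2 k (frob_alpha (build a (bet z1 z2 k a)))" unfolding nu_alpha by (rule x)
      show ?thesis by (intro exI[of _ "build a (bet z1 z2 k a)"] conjI nu_partition b1 b2 b3)
qed

lemma sub_part:
  assumes z: "z2 < z1" and pm: "is_partition \<mu>" and sm: "sum_list \<mu> = m" and am: "asymmetric z1 z2 k \<mu>"
  shows "is_partition (lam z1 z2 k (frob_alpha \<mu>)) \<and> sum_list (lam z1 z2 k (frob_alpha \<mu>)) = m \<and>
     (\<exists>a. k \<le> length a \<and> sorted_wrt (>) a \<and> lam z1 z2 k (frob_alpha \<mu>) = lam z1 z2 k a)"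
proof -
  let ?al = "frob_alpha \<mu>"
  have l: "length ?al = frob_rank \<mu>" by (simp add: frob_alpha_def)
  have k: "1 \<le> k" "k \<le> length ?al" and sa: "sorted_wrt (>) ?al"
    using am l unfolding asym_iff by auto
  have z1: "1 \<le> z1" using z by simp
  have b1: "is_partition (lam z1 z2 k ?al)" by (rule lam_partition[OF z1 sa k])
  have b2: "sum_list (lam z1 z2 k ?al) = m" using asym_facts(2)[OF am pm z] sm by simp
  show ?thesis by (intro conjI b1 b2 exI[of _ ?al] k(2) sa refl)
qed

theorem proposition6p1:
  fixes z1 z2 k m :: nat
  assumes "z2 < z1" and "1 \<le> k"
  shows "card {\<mu>. is_partition \<mu> \<and> sum_list \<mu> = m \<and> asymmetric z1 z2 k \<mu>}
       = card {\<mu>. is_partition \<mu> \<and> sum_list \<mu> = m \<and>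
                  (\<exists>a. k \<le> length a \<and> sorted_wrt (>) a \<and> \<mu> = lam z1 z2 k a)}"
proof (rule bij_betw_same_card)
  let ?A = "{\<mu>. is_partition \<mu> \<and> sum_list \<mu> = m \<and> asymmetric z1 z2 k \<mu>}"
  let ?B = "{\<mu>. is_partition \<mu> \<and> sum_list \<mu> = m \<and>
                  (\<exists>a. k \<le> length a \<and> sorted_wrt (>) a \<and> \<mu> = lam z1 z2 k a)}"
  let ?f = "\<lambda>\<mu>. lam z1 z2 k (frob_alpha \<mu>)"
  have z: "z2 < z1" and k1: "1 \<le> k" using assms by auto
  have inj: "inj_on ?f ?A"
  proof (rule inj_onI)
    fix \<mu> \<nu> assume m: "\<mu> \<in> ?A" and n: "\<nu> \<in> ?A" and e: "?f \<mu> = ?f \<nu>"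
    from m have hm: "is_partition \<mu> \<and> sum_list \<mu> = m \<and> asymmetric z1 z2 k \<mu>" by (simp only: mem_Collect_eq)
    from n have hn: "is_partition \<nu> \<and> sum_list \<nu> = m \<and> asymmetric z1 z2 k \<nu>" by (simp only: mem_Collect_eq)
    from hm have pm: "is_partition \<mu>" and am: "asymmetric z1 z2 k \<mu>" by blast+
    from hn have pn: "is_partition \<nu>" and an: "asymmetric z1 z2 k \<nu>" by blast+
    have s1: "sorted_wrt (>) (frob_alpha \<mu>)" using am unfolding asym_iff by (elim conjE)
    have s2: "sorted_wrt (>) (frob_alpha \<nu>)" using an unfolding asym_iff by (elim conjE)
    have ea: "frob_alpha \<mu> = frob_alpha \<nu>" by (rule lam_inj[OF s1 s2 e])
    have "\<mu> = build (frob_alpha \<mu>) (bet z1 z2 k (frob_alpha \<mu>))" by (rule asym_facts(1)[OF am pm z])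
    also have "\<dots> = build (frob_alpha \<nu>) (bet z1 z2 k (frob_alpha \<nu>))" unfolding ea ..
    also have "\<dots> = \<nu>" by (rule asym_facts(1)[OF an pn z, symmetric])
    finally show "\<mu> = \<nu>" .
  qed
  have sub: "?f ` ?A \<subseteq> ?B"
  proof (rule subsetI)
    fix x assume "x \<in> ?f ` ?A"
    then obtain \<mu> where m: "\<mu> \<in> ?A" and x: "x = ?f \<mu>" by (rule imageE)
    from m have hm: "is_partition \<mu> \<and> sum_list \<mu> = m \<and> asymmetric z1 z2 k \<mu>" by (simp only: mem_Collect_eq)
    from hm have pm: "is_partition \<mu>" and sm: "sum_list \<mu> = m" and am: "asymmetric z1 z2 k \<mu>" by blast+
    have "?f \<mu> \<in> ?B" using sub_part[OF z pm sm am] by (simp only: mem_Collect_eq)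
    then show "x \<in> ?B" unfolding x .
  qed
  have sup: "?B \<subseteq> ?f ` ?A"
  proof (rule subsetI)
    fix x assume "x \<in> ?B"
    then have hx: "is_partition x \<and> sum_list x = m \<and> (\<exists>a. k \<le> length a \<and> sorted_wrt (>) a \<and> x = lam z1 z2 k a)"
      by (simp only: mem_Collect_eq)
    from hx have p: "is_partition x" by (elim conjE)
    from hx have sx: "sum_list x = m" by (elim conjE)
    from hx have ex: "\<exists>a. k \<le> length a \<and> sorted_wrt (>) a \<and> x = lam z1 z2 k a" by (elim conjE)
    from ex obtain a where k: "k \<le> length a" and sa: "sorted_wrt (>) a" and x: "x = lam z1 z2 k a"
      by (elim exE conjE)
    from sup_part[OF z k1 p sx k sa x] obtain \<mu> where
      h: "is_partition \<mu> \<and> sum_list \<mu> = m \<and> asymmetric z1 z2 k \<mu> \<and> x = ?f \<mu>"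
      by (elim exE)
    from h have m: "\<mu> \<in> ?A" by (simp only: mem_Collect_eq)
    from h have x': "x = ?f \<mu>" by (elim conjE)
    show "x \<in> ?f ` ?A" by (rule image_eqI[where f="?f", OF x' m])
  qed
  show "bij_betw ?f ?A ?B" unfolding bij_betw_def using inj sub sup by (intro conjI equalityI)
qed


end
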